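(* Let $P$ be a commutative ring, $x,y$ a regular sequence in $P$, and $a,n,r$ integers with $a\ge0$, $n\ge1$, $0\le r\le n-1$; let $f=x^n+y^n$ and $N=an+r$. Assume $f$ is a regular element of $P$ and let $R=P/(f)$. Put $$D=\begin{bmatrix}x^{n-r}&(-1)^{a-1}y^r\\(-1)^ay^{n-r}&x^r\end{bmatrix},\qquad \check D=\begin{bmatrix}x^r&(-1)^ay^r\\(-1)^{a+1}y^{n-r}&x^{n-r}\end{bmatrix}.$$ Then $$\cdots\xrightarrow{\check D}R^2\xrightarrow{D}R^2\xrightarrow{\check D}R^2\xrightarrow{D}R^2\xrightarrow{[x^N\ y^N]}R\to R/(x^N,y^N)R\to0$$ is a resolution of $R/(x^N,y^N)R$ by free $R$-modules. *)

theory Defs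
  imports Main
begin

(* Elements of R = P/(f) are represented by elements of P; two representatives
   give the same element of R iff their difference is divisible by f.
   Elements of R^2 are represented by pairs (column vectors) in P x P. *)

definition modf :: "'a::comm_ring_1 \<Rightarrow> 'a \<Rightarrow> 'a \<Rightarrow> bool" where
  "modf f u v \<longleftrightarrow> f dvd (u - v)"

definition modf2 :: "'a::comm_ring_1 \<Rightarrow> 'a \<times> 'a \<Rightarrow> 'a \<times> 'a \<Rightarrow> bool" where
  "modf2 f w z \<longleftrightarrow> modf f (fst w) (fst z) \<and> modf f (snd w) (snd z)"

definition regular_elem :: "'a::comm_ring_1 \<Rightarrow> bool" where
  "regular_elem x \<longleftrightarrow> (\<forall>z. x * z = 0 \<longrightarrow> z = 0)"

definition regular_seq2 :: "'a::comm_ring_1 \<Rightarrow> 'a \<Rightarrow> bool" where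
  "regular_seq2 x y \<longleftrightarrow> regular_elem x \<and> (\<forall>z. x dvd (y * z) \<longrightarrow> x dvd z)
     \<and> \<not> (\<exists>u v. u * x + v * y = 1)"

definition mat2 :: "'a::comm_ring_1 \<Rightarrow> 'a \<Rightarrow> 'a \<Rightarrow> 'a \<Rightarrow> 'a \<times> 'a \<Rightarrow> 'a \<times> 'a" where
  "mat2 m11 m12 m21 m22 w = (m11 * fst w + m12 * snd w, m21 * fst w + m22 * snd w)"

(* D = [[x^(n-r), (-1)^(a-1) y^r], [(-1)^a y^(n-r), x^r]];
   note (-1)^(a-1) = (-1)^(a+1) for every integer a (in particular a = 0). *)
definition matD :: "nat \<Rightarrow> nat \<Rightarrow> nat \<Rightarrow> 'a::comm_ring_1 \<Rightarrow> 'a \<Rightarrow> 'a \<times> 'a \<Rightarrow> 'a \<times> 'a" where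
  "matD a n r x y = mat2 (x ^ (n - r)) ((-1) ^ (a + 1) * y ^ r) ((-1) ^ a * y ^ (n - r)) (x ^ r)"

definition matDc :: "nat \<Rightarrow> nat \<Rightarrow> nat \<Rightarrow> 'a::comm_ring_1 \<Rightarrow> 'a \<Rightarrow> 'a \<times> 'a \<Rightarrow> 'a \<times> 'a" where
  "matDc a n r x y = mat2 (x ^ r) ((-1) ^ a * y ^ r) ((-1) ^ (a + 1) * y ^ (n - r)) (x ^ (n - r))"

(* The differentials d_k : R^2 \<rightarrow> R^2 for k \<ge> 2 of the complex
   ... --Dc--> R^2 --D--> R^2 --Dc--> R^2 --D--> R^2 --[x^N y^N]--> R :
   d_2 = D, d_3 = Dc, d_4 = D, ... *)
definition dk :: "nat \<Rightarrow> nat \<Rightarrow> nat \<Rightarrow> 'a::comm_ring_1 \<Rightarrow> 'a \<Rightarrow> nat \<Rightarrow> 'a \<times> 'a \<Rightarrow> 'a \<times> 'a" where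
  "dk a n r x y k = (if even k then matD a n r x y else matDc a n r x y)"

definition row1 :: "nat \<Rightarrow> 'a::comm_ring_1 \<Rightarrow> 'a \<Rightarrow> 'a \<times> 'a \<Rightarrow> 'a" where
  "row1 N x y w = x ^ N * fst w + y ^ N * snd w"

(* ideal (x^N, y^N)R of R, pulled back to P: (x^N, y^N, f)P *)
definition idealN :: "nat \<Rightarrow> 'a::comm_ring_1 \<Rightarrow> 'a \<Rightarrow> 'a \<Rightarrow> 'a set" where
  "idealN N f x y = {c. \<exists>u v w. c = u * x ^ N + v * y ^ N + w * f}"

end

theory Submission
  imports Defs
begin

lemma diff_dvd_pow_diff: "((p::'a::comm_ring_1) - q) dvd (p ^ k - q ^ k)"
proof (induction k)
  case 0 then show ?case by simp
next
  case (Suc k)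
  have "p ^ Suc k - q ^ Suc k = p * (p ^ k - q ^ k) + q ^ k * (p - q)"
    by (simp add: algebra_simps)
  then show ?case using Suc by (simp add: dvd_add dvd_mult)
qed

lemma reg_cancel: "regular_elem x \<Longrightarrow> x * p = x * q \<Longrightarrow> p = q"
  unfolding regular_elem_def by (metis eq_iff_diff_eq_0 right_diff_distrib)

lemma reg_pow: "regular_elem x \<Longrightarrow> regular_elem (x ^ m)"
proof (induction m)
  case 0 then show ?case by (simp add: regular_elem_def)
next
  case (Suc m)
  show ?case unfolding regular_elem_def
  proof (intro allI impI)
    fix z assume "x ^ Suc m * z = 0"
    then have "x * (x ^ m * z) = 0" by (simp add: mult.assoc)
    then have "x ^ m * z = 0" using Suc.prems unfolding regular_elem_def by blast
    then show "z = 0" using Suc.IH Suc.prems unfolding regular_elem_def by blast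
  qed
qed

lemma nzd_pow_mod:
  assumes "regular_elem x" "\<forall>z. x dvd y * z \<longrightarrow> x dvd z"
  shows "x ^ m dvd y * g \<Longrightarrow> x ^ m dvd g"
proof (induction m arbitrary: g)
  case 0 then show ?case by simp
next
  case (Suc m)
  have "x dvd x ^ Suc m" by simp
  then have "x dvd y * g" using Suc.prems by (rule dvd_trans)
  then have "x dvd g" using assms(2) by blast
  then obtain g' where g: "g = x * g'" by (auto simp: dvd_def)
  obtain q where q: "y * g = x ^ Suc m * q" using Suc.prems by (auto simp: dvd_def)
  have "x * (y * g') = x * (x ^ m * q)" using q unfolding g by (simp add: algebra_simps)
  then have "y * g' = x ^ m * q" by (rule reg_cancel[OF assms(1)])
  then have "x ^ m dvd y * g'" by simp
  then have "x ^ m dvd g'" by (rule Suc.IH)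
  then show ?case using g by (simp add: mult_dvd_mono)
qed

lemma nzd_iter:
  fixes c y g :: "'a::comm_ring_1"
  assumes "\<forall>z. c dvd y * z \<longrightarrow> c dvd z"
  shows "c dvd y ^ k * g \<Longrightarrow> c dvd g"
proof (induction k arbitrary: g)
  case 0 then show ?case by simp
next
  case (Suc k)
  have "c dvd y * (y ^ k * g)" using Suc.prems by (simp add: mult.assoc)
  then have "c dvd y ^ k * g" using assms by blast
  then show ?case using Suc.IH by blast
qed

lemma y_mod_f:
  assumes "regular_elem x" "\<forall>z. x dvd y * z \<longrightarrow> x dvd z" "n \<ge> 1"
  shows "\<forall>g. (x ^ n + y ^ n) dvd y * g \<longrightarrow> (x ^ n + y ^ n) dvd g"
proof (intro allI impI)
  fix g assume "(x ^ n + y ^ n) dvd y * g"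
  then obtain t where t: "y * g = (x ^ n + y ^ n) * t" by (auto simp: dvd_def)
  have yn: "y ^ n = y * y ^ (n - 1)" using assms(3) by (cases n) auto
  have e1: "y * (g - y ^ (n - 1) * t) = y * g - y ^ n * t"
    unfolding yn by (simp add: algebra_simps)
  have e2: "y * g - y ^ n * t = x ^ n * t" unfolding t by (simp add: algebra_simps)
  have "x ^ n dvd y * (g - y ^ (n - 1) * t)" unfolding e1 e2 by simp
  then have "x ^ n dvd (g - y ^ (n - 1) * t)" by (rule nzd_pow_mod[OF assms(1,2)])
  then obtain h where h: "g - y ^ (n - 1) * t = x ^ n * h" by (auto simp: dvd_def)
  have g': "g = x ^ n * h + y ^ (n - 1) * t" using h by (simp add: diff_eq_eq)
  have "x ^ n * t + y ^ n * t = y * g" unfolding t by (simp add: distrib_right)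
  also have "\<dots> = x ^ n * (y * h) + y ^ n * t"
    unfolding g' yn by (simp add: algebra_simps)
  finally have "x ^ n * (y * h) = x ^ n * t" by simp
  then have th: "t = y * h" using reg_cancel[OF reg_pow[OF assms(1)]] by metis
  have "g = (x ^ n + y ^ n) * h" unfolding g' th yn by (simp add: algebra_simps)
  then show "(x ^ n + y ^ n) dvd g" by simp
qed

lemma mat_exact:
  assumes reg: "regular_elem f"
    and MN: "\<And>z. M (N z) = (f * fst z, f * snd z)"
    and NM: "\<And>z. N (M z) = (f * fst z, f * snd z)"
    and linM: "\<And>w q1 q2. M (fst w + f * q1, snd w + f * q2)
        = (fst (M w) + f * fst (M (q1, q2)), snd (M w) + f * snd (M (q1, q2)))"
    and linN: "\<And>q1 q2. N (f * q1, f * q2) = (f * fst (N (q1, q2)), f * snd (N (q1, q2)))"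
  shows "modf2 f (M w) (0, 0) \<longleftrightarrow> (\<exists>z. modf2 f w (N z))"
proof
  assume "modf2 f (M w) (0, 0)"
  then obtain v1 v2 where v: "fst (M w) = f * v1" "snd (M w) = f * v2"
    by (auto simp: modf2_def modf_def dvd_def)
  then have "M w = (f * v1, f * v2)" by (simp add: prod_eq_iff)
  then have "(f * fst w, f * snd w) = (f * fst (N (v1, v2)), f * snd (N (v1, v2)))"
    using NM[of w] linN by simp
  then have "fst w = fst (N (v1, v2))" "snd w = snd (N (v1, v2))"
    using reg_cancel reg by auto
  then have "modf2 f w (N (v1, v2))" by (simp add: modf2_def modf_def)
  then show "\<exists>z. modf2 f w (N z)" by blast
next
  assume "\<exists>z. modf2 f w (N z)"
  then obtain z where "modf2 f w (N z)" by blast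
  then obtain q1 q2 where q: "fst w - fst (N z) = f * q1" "snd w - snd (N z) = f * q2"
    by (auto simp: modf2_def modf_def dvd_def)
  then have "w = (fst (N z) + f * q1, snd (N z) + f * q2)"
    by (simp add: prod_eq_iff algebra_simps)
  then have "M w = (f * fst z + f * fst (M (q1, q2)), f * snd z + f * snd (M (q1, q2)))"
    using linM[of "N z" q1 q2] MN[of z] by simp
  then show "modf2 f (M w) (0, 0)"
    by (simp add: modf2_def modf_def flip: distrib_left)
qed

lemma mat2_linM: "mat2 a b c d (fst w + f * q1, snd w + f * q2)
   = (fst (mat2 a b c d w) + f * fst (mat2 a b c d (q1, q2)),
      snd (mat2 a b c d w) + f * snd (mat2 a b c d (q1, q2)))"
  by (simp add: mat2_def algebra_simps)

lemma mat2_linN: "mat2 a b c d (f * q1, f * q2)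
   = (f * fst (mat2 a b c d (q1, q2)), f * snd (mat2 a b c d (q1, q2)))"
  by (simp add: mat2_def algebra_simps)

lemma comp1:
  assumes "s * s = 1" "p * q = X" "u * v = Y"
  shows "mat2 p (- s * u) (s * v) q (mat2 q (s * u) (- s * v) p z) = ((X + Y) * fst z, (X + Y) * snd z)"
proof -
  have "fst (mat2 p (- s * u) (s * v) q (mat2 q (s * u) (- s * v) p z)) - (p * q + u * v) * fst z
      = (s * s - 1) * u * v * fst z"
   "snd (mat2 p (- s * u) (s * v) q (mat2 q (s * u) (- s * v) p z)) - (p * q + u * v) * snd z
      = (s * s - 1) * u * v * snd z"
    by (simp_all add: mat2_def algebra_simps)
  then show ?thesis using assms by (simp add: prod_eq_iff)
qed

lemma comp2:
  assumes "s * s = 1" "p * q = X" "u * v = Y"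
  shows "mat2 q (s * u) (- s * v) p (mat2 p (- s * u) (s * v) q z) = ((X + Y) * fst z, (X + Y) * snd z)"
proof -
  have "fst (mat2 q (s * u) (- s * v) p (mat2 p (- s * u) (s * v) q z)) - (p * q + u * v) * fst z
      = (s * s - 1) * u * v * fst z"
   "snd (mat2 q (s * u) (- s * v) p (mat2 p (- s * u) (s * v) q z)) - (p * q + u * v) * snd z
      = (s * s - 1) * u * v * snd z"
    by (simp_all add: mat2_def algebra_simps)
  then show ?thesis using assms by (simp add: prod_eq_iff)
qed

lemma matD_eq: "matD a n r x y = mat2 (x ^ (n - r)) (- ((-1) ^ a) * y ^ r) ((-1) ^ a * y ^ (n - r)) (x ^ r)"
  by (simp add: matD_def)

lemma matDc_eq: "matDc a n r x y = mat2 (x ^ r) ((-1) ^ a * y ^ r) (- ((-1) ^ a) * y ^ (n - r)) (x ^ (n - r))"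
  by (simp add: matDc_def)

theorem corollary9p3:
  fixes x y :: "'a::comm_ring_1" and a n r :: nat
  assumes "regular_seq2 x y"
    and "n \<ge> 1" and "r \<le> n - 1"
    and "regular_elem (x ^ n + y ^ n)"
  shows
    \<comment> \<open>exactness at R: the kernel of R \<rightarrow> R/(x^N,y^N)R is the image of [x^N y^N]\<close>
    "(\<forall>c. c \<in> idealN (a * n + r) (x ^ n + y ^ n) x y \<longleftrightarrow>
          (\<exists>w. modf (x ^ n + y ^ n) c (row1 (a * n + r) x y w)))
   \<and> \<comment> \<open>exactness at the first R^2: ker [x^N y^N] = im D\<close>
     (\<forall>w. modf (x ^ n + y ^ n) (row1 (a * n + r) x y w) 0 \<longleftrightarrow>
          (\<exists>z. modf2 (x ^ n + y ^ n) w (dk a n r x y 2 z)))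
   \<and> \<comment> \<open>exactness at every later R^2: ker d_k = im d_(k+1), k \<ge> 2\<close>
     (\<forall>k\<ge>2. \<forall>w. modf2 (x ^ n + y ^ n) (dk a n r x y k w) (0, 0) \<longleftrightarrow>
          (\<exists>z. modf2 (x ^ n + y ^ n) w (dk a n r x y (Suc k) z)))"
proof (intro conjI allI impI)
  define f where "f = x ^ n + y ^ n"
  define N where "N = a * n + r"
  define s :: 'a where "s = (-1) ^ a"
  have ss: "s * s = 1" unfolding s_def by (simp flip: power_add)
  have rn: "r \<le> n" using assms(2,3) by simp
  have xr: "x ^ (n - r) * x ^ r = x ^ n" "x ^ r * x ^ (n - r) = x ^ n"
    using rn by (simp_all flip: power_add)
  have yr: "y ^ r * y ^ (n - r) = y ^ n" "y ^ (n - r) * y ^ r = y ^ n"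
    using rn by (simp_all flip: power_add)
  have regx: "regular_elem x" and nzd: "\<forall>z. x dvd y * z \<longrightarrow> x dvd z"
    using assms(1) unfolding regular_seq2_def by blast+
  have regf: "regular_elem f" using assms(4) f_def by simp
  have xN: "x ^ N = (x ^ n) ^ a * x ^ r" and yN: "y ^ N = (y ^ n) ^ a * y ^ r"
    unfolding N_def by (metis power_add power_mult mult.commute)+
  have fd: "f dvd (x ^ n) ^ a - s * (y ^ n) ^ a"
  proof -
    have "(x ^ n - (- (y ^ n))) dvd ((x ^ n) ^ a - (- (y ^ n)) ^ a)" by (rule diff_dvd_pow_diff)
    moreover have "(- (y ^ n)) ^ a = s * (y ^ n) ^ a" unfolding s_def
      by (metis mult_minus1 power_mult_distrib)
    ultimately show ?thesis unfolding f_def by simp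
  qed
  fix c
  show "c \<in> idealN (a * n + r) (x ^ n + y ^ n) x y \<longleftrightarrow>
          (\<exists>w. modf (x ^ n + y ^ n) c (row1 (a * n + r) x y w))"
  proof
    assume "c \<in> idealN (a * n + r) (x ^ n + y ^ n) x y"
    then obtain u v w where c: "c = u * x ^ N + v * y ^ N + w * f"
      by (auto simp: idealN_def N_def f_def)
    have "modf f c (row1 N x y (u, v))"
      unfolding modf_def row1_def c by (simp add: algebra_simps)
    then show "\<exists>w. modf (x ^ n + y ^ n) c (row1 (a * n + r) x y w)"
      unfolding f_def N_def by blast
  next
    assume "\<exists>w. modf (x ^ n + y ^ n) c (row1 (a * n + r) x y w)"
    then obtain w t where "c - row1 N x y w = f * t"
      by (auto simp: modf_def dvd_def f_def N_def)
    then have "c = fst w * x ^ N + snd w * y ^ N + t * f"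
      by (simp add: row1_def algebra_simps)
    then show "c \<in> idealN (a * n + r) (x ^ n + y ^ n) x y"
      unfolding idealN_def N_def f_def by blast
  qed
next
  define f where "f = x ^ n + y ^ n"
  define N where "N = a * n + r"
  define s :: 'a where "s = (-1) ^ a"
  have ss: "s * s = 1" unfolding s_def by (simp flip: power_add)
  have rn: "r \<le> n" using assms(2,3) by simp
  have xr: "x ^ (n - r) * x ^ r = x ^ n" "x ^ r * x ^ (n - r) = x ^ n"
    using rn by (simp_all flip: power_add)
  have yr: "y ^ r * y ^ (n - r) = y ^ n" "y ^ (n - r) * y ^ r = y ^ n"
    using rn by (simp_all flip: power_add)
  have regx: "regular_elem x" and nzd: "\<forall>z. x dvd y * z \<longrightarrow> x dvd z"
    using assms(1) unfolding regular_seq2_def by blast+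
  have xN: "x ^ N = (x ^ n) ^ a * x ^ r" and yN: "y ^ N = (y ^ n) ^ a * y ^ r"
    unfolding N_def by (metis power_add power_mult mult.commute)+
  have fd: "f dvd (x ^ n) ^ a - s * (y ^ n) ^ a"
  proof -
    have "(x ^ n - (- (y ^ n))) dvd ((x ^ n) ^ a - (- (y ^ n)) ^ a)" by (rule diff_dvd_pow_diff)
    moreover have "(- (y ^ n)) ^ a = s * (y ^ n) ^ a" unfolding s_def
      by (metis mult_minus1 power_mult_distrib)
    ultimately show ?thesis unfolding f_def by simp
  qed
  have D2: "dk a n r x y 2 = mat2 (x ^ (n - r)) (- s * y ^ r) (s * y ^ (n - r)) (x ^ r)"
    by (simp add: dk_def matD_eq s_def)
  fix w :: "'a \<times> 'a"
  obtain w1 w2 where w: "w = (w1, w2)" by (cases w)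
  show "modf (x ^ n + y ^ n) (row1 (a * n + r) x y w) 0 \<longleftrightarrow>
          (\<exists>z. modf2 (x ^ n + y ^ n) w (dk a n r x y 2 z))"
    unfolding f_def[symmetric] N_def[symmetric] D2
  proof
    assume "modf f (row1 N x y w) 0"
    then have h0: "f dvd x ^ N * w1 + y ^ N * w2" by (simp add: modf_def row1_def w)
    have eq2: "x ^ N * w1 + y ^ N * w2 - ((x ^ n) ^ a - s * (y ^ n) ^ a) * (x ^ r * w1)
        = (y ^ n) ^ a * (s * x ^ r * w1 + y ^ r * w2)"
      by (simp add: xN yN algebra_simps)
    have "f dvd x ^ N * w1 + y ^ N * w2 - ((x ^ n) ^ a - s * (y ^ n) ^ a) * (x ^ r * w1)"
      by (intro dvd_diff h0 dvd_mult2 fd)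
    then have "f dvd (y ^ n) ^ a * (s * x ^ r * w1 + y ^ r * w2)"
      by (simp only: eq2)
    then have "f dvd y ^ (n * a) * (s * x ^ r * w1 + y ^ r * w2)"
      by (simp add: power_mult)
    then have "f dvd s * x ^ r * w1 + y ^ r * w2"
      using nzd_iter[OF y_mod_f[OF regx nzd assms(2)]] f_def by blast
    then obtain t where t: "s * x ^ r * w1 + y ^ r * w2 = f * t" by (auto simp: dvd_def)
    have AB: "x ^ r * (s * w1 - x ^ (n - r) * t) = y ^ r * (y ^ (n - r) * t - w2)"
    proof -
      have "x ^ r * (s * w1 - x ^ (n - r) * t) - y ^ r * (y ^ (n - r) * t - w2)
          = (s * x ^ r * w1 + y ^ r * w2) - (x ^ r * x ^ (n - r) + y ^ r * y ^ (n - r)) * t"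
        by (simp add: algebra_simps)
      also have "\<dots> = 0" using t xr yr f_def by simp
      finally show ?thesis by simp
    qed
    have "x ^ r dvd y ^ r * (y ^ (n - r) * t - w2)" using AB by (metis dvd_triv_left)
    then have "x ^ r dvd (y ^ (n - r) * t - w2)"
      using nzd_iter[of "x ^ r" y r] nzd_pow_mod[OF regx nzd] by blast
    then obtain h where h: "y ^ (n - r) * t - w2 = x ^ r * h" by (auto simp: dvd_def)
    have "x ^ r * (s * w1 - x ^ (n - r) * t) = x ^ r * (y ^ r * h)"
      using AB h by (metis mult.left_commute)
    then have h2: "s * w1 - x ^ (n - r) * t = y ^ r * h"
      using reg_cancel reg_pow regx by metis
    have w1e: "w1 = s * (x ^ (n - r) * t + y ^ r * h)"
    proof -
      have "s * (s * w1) = w1" using ss by (metis mult.assoc mult_1)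
      moreover have "s * w1 = x ^ (n - r) * t + y ^ r * h" using h2 by (simp add: algebra_simps)
      ultimately show ?thesis by simp
    qed
    have "mat2 (x ^ (n - r)) (- s * y ^ r) (s * y ^ (n - r)) (x ^ r) (s * t, - h) = w"
    proof -
      have e1: "x ^ (n - r) * (s * t) + - s * y ^ r * - h = s * (x ^ (n - r) * t + y ^ r * h)"
        by (simp add: algebra_simps)
      have e2: "s * y ^ (n - r) * (s * t) + x ^ r * - h = (s * s) * (y ^ (n - r) * t) - x ^ r * h"
        by (simp add: algebra_simps)
      show ?thesis using e1 e2 ss w1e h w
        by (simp add: mat2_def algebra_simps)
    qed
    then have "modf2 f w (mat2 (x ^ (n - r)) (- s * y ^ r) (s * y ^ (n - r)) (x ^ r) (s * t, - h))"
      by (simp add: modf2_def modf_def)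
    then show "\<exists>z. modf2 f w (mat2 (x ^ (n - r)) (- s * y ^ r) (s * y ^ (n - r)) (x ^ r) z)"
      by blast
  next
    assume "\<exists>z. modf2 f w (mat2 (x ^ (n - r)) (- s * y ^ r) (s * y ^ (n - r)) (x ^ r) z)"
    then obtain z1 z2 where "modf2 f w (mat2 (x ^ (n - r)) (- s * y ^ r) (s * y ^ (n - r)) (x ^ r) (z1, z2))"
      by (metis surj_pair)
    then obtain q1 q2 where
      q1: "w1 - (x ^ (n - r) * z1 + - s * y ^ r * z2) = f * q1" and
      q2: "w2 - (s * y ^ (n - r) * z1 + x ^ r * z2) = f * q2"
      by (auto simp: modf2_def modf_def dvd_def mat2_def w)
    define X where "X = x ^ n"
    define Y where "Y = y ^ n"
    have "row1 N x y w - f * (x ^ N * q1 + y ^ N * q2)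
        = X ^ a * x ^ r * (x ^ (n - r) * z1 + - s * y ^ r * z2)
          + Y ^ a * y ^ r * (s * y ^ (n - r) * z1 + x ^ r * z2)"
    proof -
      have w1e: "w1 = (x ^ (n - r) * z1 + - s * y ^ r * z2) + f * q1"
        using q1 by (simp add: algebra_simps)
      have w2e: "w2 = (s * y ^ (n - r) * z1 + x ^ r * z2) + f * q2"
        using q2 by (simp add: algebra_simps)
      show ?thesis unfolding row1_def w fst_conv snd_conv xN yN X_def Y_def
        by (subst w1e, subst w2e, simp add: algebra_simps)
    qed
    also have "\<dots> = (X ^ a - s * Y ^ a) * (X * z1 - s * x ^ r * y ^ r * z2)
          + f * (s * Y ^ a * z1) + (1 - s * s) * Y ^ a * x ^ r * y ^ r * z2"
    proof -
      have "X ^ a * x ^ r * (x ^ (n - r) * z1 + - s * y ^ r * z2)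
          + Y ^ a * y ^ r * (s * y ^ (n - r) * z1 + x ^ r * z2)
          = X ^ a * (x ^ r * x ^ (n - r)) * z1 - s * X ^ a * x ^ r * y ^ r * z2
            + s * Y ^ a * (y ^ r * y ^ (n - r)) * z1 + Y ^ a * x ^ r * y ^ r * z2"
        by (simp add: algebra_simps)
      also have "\<dots> = X ^ a * X * z1 - s * X ^ a * x ^ r * y ^ r * z2
            + s * Y ^ a * Y * z1 + Y ^ a * x ^ r * y ^ r * z2"
        using xr yr X_def Y_def by simp
      also have "\<dots> = (X ^ a - s * Y ^ a) * (X * z1 - s * x ^ r * y ^ r * z2)
          + (X + Y) * (s * Y ^ a * z1) + (1 - s * s) * Y ^ a * x ^ r * y ^ r * z2"
        by (simp add: algebra_simps)
      finally show ?thesis using f_def X_def Y_def by simp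
    qed
    finally have eq: "row1 N x y w = f * (x ^ N * q1 + y ^ N * q2) +
        ((X ^ a - s * Y ^ a) * (X * z1 - s * x ^ r * y ^ r * z2) + f * (s * Y ^ a * z1))"
      using ss by (simp add: algebra_simps)
    have "f dvd row1 N x y w" unfolding eq using fd X_def Y_def
      by (simp add: dvd_add dvd_mult2)
    then show "modf f (row1 N x y w) 0" by (simp add: modf_def)
  qed
next
  define f where "f = x ^ n + y ^ n"
  define s :: 'a where "s = (-1) ^ a"
  have ss: "s * s = 1" unfolding s_def by (simp flip: power_add)
  have rn: "r \<le> n" using assms(2,3) by simp
  have xr: "x ^ (n - r) * x ^ r = x ^ n"
    using rn by (simp_all flip: power_add)
  have yr: "y ^ r * y ^ (n - r) = y ^ n"
    using rn by (simp_all flip: power_add)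
  have regf: "regular_elem f" using assms(4) f_def by simp
  define MD where "MD = mat2 (x ^ (n - r)) (- s * y ^ r) (s * y ^ (n - r)) (x ^ r)"
  define MC where "MC = mat2 (x ^ r) (s * y ^ r) (- s * y ^ (n - r)) (x ^ (n - r))"
  have DC: "\<And>z. MD (MC z) = (f * fst z, f * snd z)"
    unfolding MD_def MC_def f_def by (rule comp1[OF ss xr yr])
  have CD: "\<And>z. MC (MD z) = (f * fst z, f * snd z)"
    unfolding MD_def MC_def f_def by (rule comp2[OF ss xr yr])
  have linD1: "\<And>w q1 q2. MD (fst w + f * q1, snd w + f * q2)
        = (fst (MD w) + f * fst (MD (q1, q2)), snd (MD w) + f * snd (MD (q1, q2)))"
    unfolding MD_def by (rule mat2_linM)
  have linD2: "\<And>q1 q2. MD (f * q1, f * q2) = (f * fst (MD (q1, q2)), f * snd (MD (q1, q2)))"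
    unfolding MD_def by (rule mat2_linN)
  have linC1: "\<And>w q1 q2. MC (fst w + f * q1, snd w + f * q2)
        = (fst (MC w) + f * fst (MC (q1, q2)), snd (MC w) + f * snd (MC (q1, q2)))"
    unfolding MC_def by (rule mat2_linM)
  have linC2: "\<And>q1 q2. MC (f * q1, f * q2) = (f * fst (MC (q1, q2)), f * snd (MC (q1, q2)))"
    unfolding MC_def by (rule mat2_linN)
  have mD: "matD a n r x y = MD" unfolding matD_eq MD_def s_def by (rule refl)
  have mC: "matDc a n r x y = MC" unfolding matDc_eq MC_def s_def by (rule refl)
  fix k :: nat and w :: "'a \<times> 'a" assume "2 \<le> k"
  show "modf2 (x ^ n + y ^ n) (dk a n r x y k w) (0, 0) \<longleftrightarrow>
          (\<exists>z. modf2 (x ^ n + y ^ n) w (dk a n r x y (Suc k) z))"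
  proof (cases "even k")
    case True
    have e: "dk a n r x y k = MD" "dk a n r x y (Suc k) = MC"
      unfolding dk_def using True by (simp_all only: if_P if_not_P even_Suc mD mC not_not if_True if_False not_False_eq_True)
    show ?thesis unfolding e
      by (rule mat_exact[OF regf DC CD linD1 linC2, unfolded f_def])
  next
    case False
    have e: "dk a n r x y k = MC" "dk a n r x y (Suc k) = MD"
      unfolding dk_def using False by (simp_all only: if_P if_not_P even_Suc mD mC not_not if_True if_False not_False_eq_True)
    show ?thesis unfolding e
      by (rule mat_exact[OF regf CD DC linC1 linD2, unfolded f_def])
  qed
qed

end
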